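(* Consider the replace-after-random-time process with failure rate $\lambda>0$ and replacement-time density $f$. If there exist $\epsilon>0$ and $\delta>0$ such that $f(r)>\epsilon$ for all $0<r<\delta$, then $E[N(t)]=\infty$ for every $t>0$.
   Context: Let $X_1,X_2,\ldots$ be independent random variables, each exponentially distributed with rate $\lambda>0$ (density $\lambda e^{-\lambda x}$ for $x>0$). Let $R$ be a random variable, independent of $X_1,X_2,\ldots$, with an absolutely continuous distribution on $(0,\infty)$ with probability density function $f$. For $t\ge0$ define $N(t)=\max\{n\ge0:\sum_{k=1}^n\min(X_k,R)\le t\}$; $\{N(t)\}$ is called the replace-after-random-time (RaRT) process. *)

theory Defs
  imports "HOL-Probability.Probability"
begin

text \<open>X k is the (k+1)-th failure time X_(k+1); the k-th inter-renewal time is min(X_k, R).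
  N(t) = max{n >= 0 : sum_(k=1)^n min(X_k,R) <= t}, taken as a supremum in ennreal
  (it equals the maximum whenever the maximum exists, and is infinity otherwise).\<close>

definition rart_N :: "(nat \<Rightarrow> 'a \<Rightarrow> real) \<Rightarrow> ('a \<Rightarrow> real) \<Rightarrow> real \<Rightarrow> 'a \<Rightarrow> ennreal" where
  "rart_N X R t \<omega> = (SUP n \<in> {n::nat. (\<Sum>k<n. min (X k \<omega>) (R \<omega>)) \<le> t}. of_nat n)"

end

theory Submission
  imports Defs
begin

lemma rart_N_lower:
  assumes "t > 0"
  shows "(\<Sum>j<m. indicator {\<omega>. R \<omega> \<le> t / real (Suc j)} \<omega>) \<le> rart_N X R t \<omega>"
proof -
  define S where "S = {j\<in>{..<m}. R \<omega> \<le> t / real (Suc j)}"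
  have fin: "finite S" unfolding S_def by auto
  have eq: "(\<Sum>j<m. indicator {\<omega>. R \<omega> \<le> t / real (Suc j)} \<omega>) = (of_nat (card S) :: ennreal)"
    unfolding S_def by (simp add: indicator_def sum.If_cases Int_def)
  show ?thesis
  proof (cases "S = {}")
    case True show ?thesis unfolding eq True by simp
  next
    case False
    define n where "n = Suc (Max S)"
    have "Max S \<in> S" using fin False by simp
    hence Rle: "R \<omega> \<le> t / real n" unfolding S_def n_def by simp
    have "(\<Sum>k<n. min (X k \<omega>) (R \<omega>)) \<le> (\<Sum>k<n. R \<omega>)"
      by (intro sum_mono) simp
    also have "\<dots> = real n * R \<omega>" by simp
    also have "\<dots> \<le> t" using Rle n_def by (simp add: field_simps)
    finally have mem: "n \<in> {n::nat. (\<Sum>k<n. min (X k \<omega>) (R \<omega>)) \<le> t}" by simp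
    have "card S \<le> n" unfolding n_def using card_le_Suc_Max[OF fin] .
    hence "(of_nat (card S) :: ennreal) \<le> of_nat n" by simp
    also have "\<dots> \<le> rart_N X R t \<omega>" unfolding rart_N_def
      by (rule SUP_upper[OF mem])
    finally have "of_nat (card S) \<le> rart_N X R t \<omega>" .
    then show ?thesis by (simp only: eq)
  qed
qed

theorem mainTheorem10:
  fixes M :: "'a measure" and X :: "nat \<Rightarrow> 'a \<Rightarrow> real" and R :: "'a \<Rightarrow> real"
    and f :: "real \<Rightarrow> real" and l \<epsilon> \<delta> t :: real
  assumes "prob_space M"
    and "l > 0"
    and "\<And>k. distributed M lborel (X k) (\<lambda>x. ennreal (exponential_density l x))"
    and "f \<in> borel_measurable borel"
    and "\<And>r. f r \<ge> 0"
    and "\<And>r. r \<le> 0 \<Longrightarrow> f r = 0"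
    and "distributed M lborel R (\<lambda>r. ennreal (f r))"
    and "prob_space.indep_vars M (\<lambda>_. borel) (case_option R X) UNIV"
    and "\<epsilon> > 0" and "\<delta> > 0"
    and "\<And>r. 0 < r \<Longrightarrow> r < \<delta> \<Longrightarrow> f r > \<epsilon>"
    and "t > 0"
  shows "(\<integral>\<^sup>+ \<omega>. rart_N X R t \<omega> \<partial>M) = \<infinity>"
proof -
  note dist = assms(7)
  have Rm: "R \<in> borel_measurable M"
    using distributed_measurable[OF dist] by simp
  define c where "c = min \<delta> t"
  have c0: "c > 0" using assms(10,12) by (simp add: c_def)
  define A where "A j = {\<omega>. R \<omega> \<le> t / real (Suc j)}" for j
  have Asets: "{\<omega>. R \<omega> \<le> t / real (Suc j)} \<inter> space M \<in> sets M" for j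
  proof -
    have "R -` {..t / real (Suc j)} \<inter> space M \<in> sets M"
      using Rm by (rule measurable_sets) simp
    thus ?thesis by (simp add: vimage_def atMost_def)
  qed
  have key: "ennreal (\<epsilon> * c / real (Suc j)) \<le> emeasure M ({\<omega>. R \<omega> \<le> t / real (Suc j)} \<inter> space M)" for j
  proof -
    have "emeasure M (R -` {..t / real (Suc j)} \<inter> space M)
        = (\<integral>\<^sup>+x. ennreal (f x) * indicator {..t / real (Suc j)} x \<partial>lborel)"
      by (rule distributed_emeasure[OF dist]) simp
    also have "\<dots> \<ge> (\<integral>\<^sup>+x. ennreal \<epsilon> * indicator {0<..<c / real (Suc j)} x \<partial>lborel)"
    proof (intro nn_integral_mono)
      fix x
      show "ennreal \<epsilon> * indicator {0<..<c / real (Suc j)} x \<le> ennreal (f x) * indicator {..t / real (Suc j)} x"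
      proof (cases "x \<in> {0<..<c / real (Suc j)}")
        case True
        have "c / real (Suc j) \<le> c" using c0 by (simp add: divide_le_eq)
        hence "x < \<delta>" using True by (auto simp: c_def)
        hence "f x > \<epsilon>" using True assms(11) by auto
        moreover have "x \<le> t / real (Suc j)" using True
          by (auto simp: c_def divide_right_mono intro: order.trans[OF less_imp_le] )
        ultimately show ?thesis using True by (auto simp: indicator_def intro!: ennreal_leI)
      qed simp
    qed
    also have "(\<integral>\<^sup>+x. ennreal \<epsilon> * indicator {0<..<c / real (Suc j)} x \<partial>lborel) = ennreal (\<epsilon> * c / real (Suc j))"
      using c0 assms(9) by (simp add: nn_integral_cmult ennreal_mult[symmetric])
    finally show ?thesis by (simp add: vimage_def atMost_def)
  qed
  have harm: "(\<Sum>j. ennreal (1 / real (Suc j))) = top"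
    using not_summable_harmonic[where 'a=real] summable_Suc_iff[where f="\<lambda>n. 1 / (real n)"]
    by (intro summable_iff_suminf_neq_top) (auto simp add: inverse_eq_divide)
  have "top = ennreal (\<epsilon> * c) * (\<Sum>j. ennreal (1 / real (Suc j)))"
    using c0 assms(9) harm by (simp add: ennreal_mult_top)
  also have "\<dots> = (\<Sum>j. ennreal (\<epsilon> * c / real (Suc j)))"
  proof -
    have "ennreal (\<epsilon> * c) * ennreal (1 / real (Suc j)) = ennreal (\<epsilon> * c / real (Suc j))" for j
      using c0 assms(9) by (simp add: ennreal_mult[symmetric])
    thus ?thesis by (simp only: ennreal_suminf_cmult[symmetric])
  qed
  also have "\<dots> \<le> (\<Sum>j. emeasure M ({\<omega>. R \<omega> \<le> t / real (Suc j)} \<inter> space M))"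
    using key by (intro suminf_le summableI) auto
  also have "\<dots> = (\<integral>\<^sup>+ \<omega>. (\<Sum>j. indicator ({\<omega>. R \<omega> \<le> t / real (Suc j)} \<inter> space M) \<omega>) \<partial>M)"
    using Asets by (simp add: nn_integral_suminf)
  also have "\<dots> \<le> (\<integral>\<^sup>+ \<omega>. rart_N X R t \<omega> \<partial>M)"
  proof (intro nn_integral_mono)
    fix \<omega> assume om: "\<omega> \<in> space M"
    show "(\<Sum>j. indicator ({\<omega>. R \<omega> \<le> t / real (Suc j)} \<inter> space M) \<omega>) \<le> rart_N X R t \<omega>"
    proof (rule suminf_le_const[OF summableI])
      fix m
      show "(\<Sum>j<m. indicator ({\<omega>. R \<omega> \<le> t / real (Suc j)} \<inter> space M) \<omega>) \<le> rart_N X R t \<omega>"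
        using rart_N_lower[OF assms(12), where m=m and R=R and \<omega>=\<omega> and X=X] om by (simp add: indicator_def)
    qed
  qed
  finally show ?thesis by (simp add: top_unique)
qed

end
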